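(* A set of observables $A^1,\dots,A^m$ on $\mathbb C^d$ is informationally complete for pure states if and only if the composite physical imposition operator has no bifurcations in its physical fixed points, i.e. if and only if the number of rays contained in $\Gamma_{A^1\cdots A^m\Phi}$ is the same for every unit vector (generator state) $\Phi\in\mathbb C^d$.
   Context: States are unit vectors of $\mathbb C^d$; each observable $A^j$ is non-degenerate, identified with its orthonormal eigenbasis $\{\varphi^j_k\}_{k=0}^{d-1}$. Informationally complete (for pure states): whenever unit $\Phi,\Psi$ satisfy $|\langle\varphi^j_k,\Phi\rangle|=|\langle\varphi^j_k,\Psi\rangle|$ for all $j,k$, then $\Psi=e^{i\alpha}\Phi$. Physical imposition operator: $T_{A\Phi}\Psi=\sum_{k}|\langle\varphi_k,\Phi\rangle|\,u_k(\Psi)\,\varphi_k$, with $u_k(\Psi)=\langle\varphi_k,\Psi\rangle/|\langle\varphi_k,\Psi\rangle|$ if nonzero and $1$ otherwise. $\Gamma_{A\Phi}=\{\Psi\text{ unit}:T_{A\Phi}\Psi=\Psi\}$, $\Gamma_{A^1\cdots A^m\Phi}=\bigcap_j\Gamma_{A^j\Phi}$ (a union of rays $\{e^{i\alpha}\Psi\}$); a bifurcation means a change of the number of such rays as the generator state $\Phi$ varies. *)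

theory Defs
  imports "HOL-Analysis.Analysis" "HOL-Library.Equipollence"
begin

text \<open>Vectors of C^d are modelled as complex ^ 'n with d = CARD('n).
  The standard inner product is conjugate-linear in the first argument.\<close>

definition cinner :: "complex ^ 'n \<Rightarrow> complex ^ 'n \<Rightarrow> complex" where
  "cinner x y = (\<Sum>i\<in>UNIV. cnj (x $ i) * y $ i)"

text \<open>An observable (non-degenerate) is identified with its orthonormal eigenbasis
  phi :: 'n \<Rightarrow> complex ^ 'n (d vectors, indexed by 'n).\<close>

definition orthonormal_basis :: "('n \<Rightarrow> complex ^ 'n) \<Rightarrow> bool" where
  "orthonormal_basis phi \<longleftrightarrow> (\<forall>k l. cinner (phi k) (phi l) = (if k = l then 1 else 0))"

definition phase :: "('n \<Rightarrow> complex ^ 'n) \<Rightarrow> 'n \<Rightarrow> complex ^ 'n \<Rightarrow> complex" where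
  "phase phi k Psi =
     (if cinner (phi k) Psi \<noteq> 0 then cinner (phi k) Psi / complex_of_real (cmod (cinner (phi k) Psi))
      else 1)"

definition imposition :: "('n \<Rightarrow> complex ^ 'n) \<Rightarrow> complex ^ 'n \<Rightarrow> complex ^ 'n \<Rightarrow> complex ^ 'n" where
  "imposition phi Phi Psi =
     (\<Sum>k\<in>UNIV. (complex_of_real (cmod (cinner (phi k) Phi)) * phase phi k Psi) *s phi k)"

definition Gamma :: "('n \<Rightarrow> complex ^ 'n) \<Rightarrow> complex ^ 'n \<Rightarrow> (complex ^ 'n) set" where
  "Gamma phi Phi = {Psi. norm Psi = 1 \<and> imposition phi Phi Psi = Psi}"

definition Gamma_comp :: "nat \<Rightarrow> (nat \<Rightarrow> 'n \<Rightarrow> complex ^ 'n) \<Rightarrow> complex ^ 'n \<Rightarrow> (complex ^ 'n) set" where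
  "Gamma_comp m A Phi = (\<Inter>j\<in>{..<m}. Gamma (A j) Phi)"

definition ray :: "complex ^ 'n \<Rightarrow> (complex ^ 'n) set" where
  "ray Psi = {cis \<alpha> *s Psi | \<alpha>. True}"

definition rays :: "(complex ^ 'n) set \<Rightarrow> (complex ^ 'n) set set" where
  "rays S = ray ` S"

definition info_complete :: "nat \<Rightarrow> (nat \<Rightarrow> 'n \<Rightarrow> complex ^ 'n) \<Rightarrow> bool" where
  "info_complete m A \<longleftrightarrow>
     (\<forall>Phi Psi. norm Phi = 1 \<longrightarrow> norm Psi = 1 \<longrightarrow>
        (\<forall>j<m. \<forall>k. cmod (cinner (A j k) Phi) = cmod (cinner (A j k) Psi)) \<longrightarrow>
        (\<exists>\<alpha>::real. Psi = cis \<alpha> *s Phi))"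

definition no_bifurcation :: "nat \<Rightarrow> (nat \<Rightarrow> 'n \<Rightarrow> complex ^ 'n) \<Rightarrow> bool" where
  "no_bifurcation m A \<longleftrightarrow>
     (\<forall>Phi Phi'. norm Phi = 1 \<longrightarrow> norm Phi' = 1 \<longrightarrow>
        rays (Gamma_comp m A Phi) \<approx> rays (Gamma_comp m A Phi'))"

end

theory Submission
  imports Defs
begin

lemma cinner_sum_right: "cinner a (\<Sum>k\<in>S. c k *s v k) = (\<Sum>k\<in>S. c k * cinner a (v k))"
  unfolding cinner_def
  by (simp add: sum_component sum_distrib_left mult_ac) (rule sum.swap)

lemma ON_coeff:
  assumes "orthonormal_basis phi"
  shows "cinner (phi l) (\<Sum>k\<in>UNIV. c k *s phi k) = c l"
proof -
  have "cinner (phi l) (phi k) = (if l = k then 1 else 0)" for k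
    using assms unfolding orthonormal_basis_def by simp
  hence "(\<Sum>k\<in>UNIV. c k * cinner (phi l) (phi k)) = (\<Sum>k\<in>UNIV. if l = k then c k else 0)"
    by (intro sum.cong) auto
  thus ?thesis unfolding cinner_sum_right by simp
qed

lemma ON_complete:
  fixes phi :: "'n::finite \<Rightarrow> complex ^ 'n"
  assumes "orthonormal_basis phi"
  shows "(\<Sum>k\<in>UNIV. cinner (phi k) x *s phi k) = x"
proof -
  define M :: "complex^'n^'n" where "M = (\<chi> k i. cnj (phi k $ i))"
  define N :: "complex^'n^'n" where "N = (\<chi> i k. phi k $ i)"
  have "M ** N = mat 1"
    using assms unfolding orthonormal_basis_def cinner_def
    by (simp add: M_def N_def matrix_matrix_mult_def mat_def vec_eq_iff)
  hence "N ** M = mat 1" using matrix_left_right_inverse by blast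
  hence NM: "(\<Sum>k\<in>UNIV. phi k $ i * cnj (phi k $ j)) = (if i = j then 1 else 0)" for i j
    by (simp add: M_def N_def matrix_matrix_mult_def mat_def vec_eq_iff)
  show ?thesis
  proof (subst vec_eq_iff, intro allI)
    fix i
    have "(\<Sum>k\<in>UNIV. cinner (phi k) x *s phi k) $ i
        = (\<Sum>k\<in>UNIV. \<Sum>j\<in>UNIV. x $ j * (phi k $ i * cnj (phi k $ j)))"
      by (simp add: cinner_def sum_distrib_left mult_ac)
    also have "\<dots> = (\<Sum>j\<in>UNIV. x $ j * (\<Sum>k\<in>UNIV. phi k $ i * cnj (phi k $ j)))"
      by (subst sum.swap) (simp add: sum_distrib_left)
    also have "\<dots> = x $ i" by (simp add: NM if_distrib cong: if_cong)
    finally show "(\<Sum>k\<in>UNIV. cinner (phi k) x *s phi k) $ i = x $ i" .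
  qed
qed

lemma mod_char:
  "(c = complex_of_real (cmod d) * (if c \<noteq> 0 then c / complex_of_real (cmod c) else 1)) \<longleftrightarrow> cmod c = cmod d"
proof (cases "c = 0")
  case True then show ?thesis by auto
next
  case False
  hence cm: "complex_of_real (cmod c) \<noteq> 0" by simp
  have "(c = complex_of_real (cmod d) * (c / complex_of_real (cmod c))) \<longleftrightarrow>
        c * complex_of_real (cmod c) = complex_of_real (cmod d) * c"
    using cm by (auto simp: field_simps)
  also have "\<dots> \<longleftrightarrow> complex_of_real (cmod c) = complex_of_real (cmod d)"
    using False by (auto simp: mult.commute)
  also have "\<dots> \<longleftrightarrow> cmod c = cmod d" by (simp only: of_real_eq_iff)
  finally show ?thesis using False by simp
qed

lemma Gamma_iff:
  fixes phi :: "'n::finite \<Rightarrow> complex ^ 'n"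
  assumes ON: "orthonormal_basis phi"
  shows "Psi \<in> Gamma phi Phi \<longleftrightarrow> norm Psi = 1 \<and> (\<forall>k. cmod (cinner (phi k) Psi) = cmod (cinner (phi k) Phi))"
proof -
  have "imposition phi Phi Psi = Psi \<longleftrightarrow>
        (\<forall>k. cinner (phi k) Psi = complex_of_real (cmod (cinner (phi k) Phi)) * phase phi k Psi)"
  proof
    assume h: "imposition phi Phi Psi = Psi"
    show "\<forall>k. cinner (phi k) Psi = complex_of_real (cmod (cinner (phi k) Phi)) * phase phi k Psi"
    proof
      fix l
      have "cinner (phi l) Psi = cinner (phi l) (imposition phi Phi Psi)" using h by simp
      also have "\<dots> = complex_of_real (cmod (cinner (phi l) Phi)) * phase phi l Psi"
        unfolding imposition_def by (rule ON_coeff[OF ON])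
      finally show "cinner (phi l) Psi = complex_of_real (cmod (cinner (phi l) Phi)) * phase phi l Psi" .
    qed
  next
    assume h: "\<forall>k. cinner (phi k) Psi = complex_of_real (cmod (cinner (phi k) Phi)) * phase phi k Psi"
    have "imposition phi Phi Psi = (\<Sum>k\<in>UNIV. cinner (phi k) Psi *s phi k)"
      unfolding imposition_def using h by (intro sum.cong) auto
    also have "\<dots> = Psi" by (rule ON_complete[OF ON])
    finally show "imposition phi Phi Psi = Psi" .
  qed
  also have "\<dots> \<longleftrightarrow> (\<forall>k. cmod (cinner (phi k) Psi) = cmod (cinner (phi k) Phi))"
    unfolding phase_def using mod_char by blast
  finally show ?thesis unfolding Gamma_def by blast
qed

lemma GC_iff:
  fixes A :: "nat \<Rightarrow> 'n::finite \<Rightarrow> complex ^ 'n"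
  assumes "m \<ge> 1" and "\<And>j. j < m \<Longrightarrow> orthonormal_basis (A j)"
  shows "Psi \<in> Gamma_comp m A Phi \<longleftrightarrow> norm Psi = 1 \<and>
     (\<forall>j<m. \<forall>k. cmod (cinner (A j k) Psi) = cmod (cinner (A j k) Phi))"
  unfolding Gamma_comp_def using assms Gamma_iff[OF assms(2)]
  by (auto, metis lessThan_iff less_one less_le_trans)

lemma cinner_self: "cinner x x = complex_of_real ((norm x)^2)"
proof -
  have "cinner x x = (\<Sum>i\<in>UNIV. complex_of_real ((norm (x $ i))^2))"
    unfolding cinner_def
  proof (intro sum.cong refl)
    fix i
    show "cnj (x $ i) * x $ i = complex_of_real ((norm (x $ i))^2)"
      by (subst complex_norm_square) (simp add: mult.commute)
  qed
  also have "\<dots> = complex_of_real ((norm x)^2)"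
    unfolding norm_vec_def L2_set_def by (simp add: sum_nonneg)
  finally show ?thesis .
qed

lemma ray_cis: "ray (cis a *s x) = ray x"
proof -
  have "ray (cis a *s x) \<subseteq> ray x" for a x
    unfolding ray_def by (auto simp: cis_mult)
  from this[of a x] this[of "-a" "cis a *s x"] show ?thesis
    by (simp add: cis_mult)
qed

lemma in_ray: "x \<in> ray x"
  unfolding ray_def by (auto intro!: exI[of _ 0])

lemma cmod1_cis: "cmod c = 1 \<Longrightarrow> c = cis (Arg c)"
proof -
  assume h: "cmod c = 1"
  hence "c \<noteq> 0" by auto
  from Arg_correct[OF this] h show "c = cis (Arg c)" by (simp add: sgn_div_norm)
qed
theorem mainTheorem11:
  fixes m :: nat and A :: "nat \<Rightarrow> 'n::finite \<Rightarrow> complex ^ 'n"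
  assumes "m \<ge> 1"
    and "\<And>j. j < m \<Longrightarrow> orthonormal_basis (A j)"
  shows "info_complete m A \<longleftrightarrow> no_bifurcation m A"
proof
  assume IC: "info_complete m A"
  have single: "rays (Gamma_comp m A Phi) = {ray Phi}" if "norm Phi = 1" for Phi
  proof -
    have mem: "Phi \<in> Gamma_comp m A Phi" using GC_iff[OF assms] that by simp
    moreover have eqr: "ray Psi = ray Phi" if "Psi \<in> Gamma_comp m A Phi" for Psi
    proof -
      from that have "norm Psi = 1" "\<forall>j<m. \<forall>k. cmod (cinner (A j k) Phi) = cmod (cinner (A j k) Psi)"
        using GC_iff[OF assms] by auto
      then obtain a where "Psi = cis a *s Phi"
        using IC \<open>norm Phi = 1\<close> unfolding info_complete_def by blast
      thus ?thesis by (simp add: ray_cis)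
    qed
    have "ray ` Gamma_comp m A Phi = (\<lambda>_. ray Phi) ` Gamma_comp m A Phi"
      by (rule image_cong[OF refl eqr])
    thus ?thesis unfolding rays_def using image_constant[OF mem] by simp
  qed
  show "no_bifurcation m A"
    unfolding no_bifurcation_def
  proof (intro allI impI)
    fix Phi Phi' :: "complex ^ 'n"
    assume "norm Phi = 1" "norm Phi' = 1"
    hence "rays (Gamma_comp m A Phi) = {ray Phi}" "rays (Gamma_comp m A Phi') = {ray Phi'}"
      using single by auto
    moreover have "bij_betw (\<lambda>_. ray Phi') {ray Phi} {ray Phi'}" by (simp add: bij_betw_def)
    ultimately show "rays (Gamma_comp m A Phi) \<approx> rays (Gamma_comp m A Phi')"
      unfolding eqpoll_def by auto
  qed
next
  assume NB: "no_bifurcation m A"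
  define k0 :: 'n where "k0 = undefined"
  define e where "e = A 0 k0"
  have ON0: "orthonormal_basis (A 0)" using assms by auto
  have ee: "cinner (A 0 k) e = (if k = k0 then 1 else 0)" for k
    using ON0 unfolding e_def orthonormal_basis_def by simp
  have "complex_of_real ((norm e)^2) = 1" using ee[of k0] cinner_self[of e] unfolding e_def by simp
  hence "(norm e)^2 = 1" by (metis of_real_1 of_real_eq_iff)
  hence ne: "norm e = 1" using norm_ge_zero[of e] by (smt (verit) power2_eq_1_iff)
  have single: "rays (Gamma_comp m A e) = {ray e}"
  proof -
    have mem: "e \<in> Gamma_comp m A e" using GC_iff[OF assms] ne by simp
    moreover have eqr: "ray Chi = ray e" if "Chi \<in> Gamma_comp m A e" for Chi
    proof -
      have mods: "cmod (cinner (A 0 k) Chi) = (if k = k0 then 1 else 0)" for k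
      proof -
        have "cmod (cinner (A 0 k) Chi) = cmod (cinner (A 0 k) e)"
          using that GC_iff[OF assms] assms(1) by auto
        thus ?thesis using ee[of k] by simp
      qed
      define c where "c = cinner (A 0 k0) Chi"
      have "Chi = (\<Sum>k\<in>UNIV. cinner (A 0 k) Chi *s A 0 k)"
        by (rule ON_complete[OF ON0, symmetric])
      also have "\<dots> = (\<Sum>k\<in>UNIV. if k = k0 then c *s e else 0)"
      proof (intro sum.cong refl)
        fix k
        show "cinner (A 0 k) Chi *s A 0 k = (if k = k0 then c *s e else 0)"
          using mods[of k] by (auto simp: c_def e_def)
      qed
      also have "\<dots> = c *s e" by simp
      finally have "Chi = cis (Arg c) *s e"
        using cmod1_cis[of c] mods[of k0] by (simp add: c_def)
      thus ?thesis by (simp add: ray_cis)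
    qed
    have "ray ` Gamma_comp m A e = (\<lambda>_. ray e) ` Gamma_comp m A e"
      by (rule image_cong[OF refl eqr])
    thus ?thesis unfolding rays_def using image_constant[OF mem] by simp
  qed
  show "info_complete m A"
    unfolding info_complete_def
  proof (intro allI impI)
    fix Phi Psi :: "complex ^ 'n"
    assume nP: "norm Phi = 1" and nS: "norm Psi = 1"
      and eq: "\<forall>j<m. \<forall>k. cmod (cinner (A j k) Phi) = cmod (cinner (A j k) Psi)"
    show "\<exists>\<alpha>::real. Psi = cis \<alpha> *s Phi"
    proof (rule ccontr)
      assume nex: "\<not> (\<exists>\<alpha>::real. Psi = cis \<alpha> *s Phi)"
      have r1: "ray Phi \<in> rays (Gamma_comp m A Phi)"
        using GC_iff[OF assms] nP unfolding rays_def by auto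
      have r2: "ray Psi \<in> rays (Gamma_comp m A Phi)"
        using GC_iff[OF assms] nS eq unfolding rays_def by auto
      have dif: "ray Phi \<noteq> ray Psi"
      proof
        assume "ray Phi = ray Psi"
        hence "Psi \<in> ray Phi" using in_ray by metis
        thus False using nex unfolding ray_def by auto
      qed
      from NB nP ne have "rays (Gamma_comp m A Phi) \<approx> {ray e}"
        unfolding no_bifurcation_def single[symmetric] by blast
      then obtain f where f: "bij_betw f (rays (Gamma_comp m A Phi)) {ray e}"
        unfolding eqpoll_def by blast
      have "f (ray Phi) \<in> {ray e}" "f (ray Psi) \<in> {ray e}"
        using bij_betwE[OF f] r1 r2 by blast+
      hence "f (ray Phi) = f (ray Psi)" by simp
      with f r1 r2 dif show False unfolding bij_betw_def inj_on_def by blast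
    qed
  qed
qed
end
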